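(* Let $\omega=[\mathbf a,\mathbf b]\subseteq[1,\infty)$ with $\mathbf a<\mathbf b$, and let $0<\delta<1$, $\Delta=(-\delta,\delta)$. Let $n\ge0$ and suppose the sequences $\mathbf a_k,\mathbf b_k,\mathbf c_k,\mathbf f_k,\mathbf d_k$ (described in the context) have been constructed for $0\le k\le n+1$ such that for every $0\le k\le n$: $0\notin\mathbf c_{k+1}$, $\mathbf a_{k+1}\cap\mathbf b_{k+1}=\emptyset$, $0\notin\mathbf f_{k+1}$, and, for every $0\le k\le n-1$, the interior of $\overline{\omega_{k+1}}$ is disjoint from $\Delta$. (These are exactly the checks passed whenever the iteration procedure reports step $n+1$.) Then $c_{n+1}(\mathbf a)\in\mathbf a_{n+1}$, $c_{n+1}(\mathbf b)\in\mathbf b_{n+1}$, $c'_{n+1}(\omega)\subseteq\mathbf c_{n+1}$, $(f^{n+1})'(\omega)\subseteq \mathbf f_{n+1}$, $\big(c'_{n+1}/(f^{n+1})'\big)(\omega)\subseteq\mathbf d_{n+1}$, and $\underline{\omega_{n+1}}\subseteq\omega_{n+1}\subseteq\overline{\omega_{n+1}}$.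
   Context: For a real parameter $a$ let $f_a(x)=a-x^2$. Define $c_0(a)=a$ and $c_{k+1}(a)=f_a(c_k(a))$ for $k\ge0$. For a parameter interval $\omega$ let $\omega_k:=\{c_k(a):a\in\omega\}$. Here $c_k'(a)$ denotes the derivative of $a\mapsto c_k(a)$ with respect to $a$, and $(f_a^k)'(c_0(a))$ the $x$-derivative of $f_a^k$ at $x=c_0(a)$ (with $f_a^0=\mathrm{id}$). Write $c_k'(\omega)=\{c_k'(a):a\in\omega\}$, $(f^k)'(\omega)=\{(f_a^k)'(c_0(a)):a\in\omega\}$, $\big(c_k'/(f^k)'\big)(\omega)=\{c_k'(a)/(f_a^k)'(c_0(a)):a\in\omega\}$. An interval $[x^-,x^+]$ has definite sign if $0\notin[x^-,x^+]$. For intervals $x,y$ let $g^-(x,y)=\min\{-2uv:u\in x,v\in y\}$, $g^+(x,y)=\max\{-2uv:u\in x,v\in y\}$. Construction. Real numbers $\mathbf a_k^\pm,\mathbf b_k^\pm,\mathbf c_k^\pm,\mathbf f_k^\pm,\mathbf d_k^\pm$ define intervals $\mathbf a_k=[\mathbf a_k^-,\mathbf a_k^+]$, etc. Let $\overline{\omega_k}$ be the convex hull of $\mathbf a_k\cup\mathbf b_k$; if $\mathbf a_k\cap\mathbf b_k=\emptyset$, let $\underline{\omega_k}$ be $[\mathbf a_k^+,\mathbf b_k^-]$ if $\mathbf a_k^+<\mathbf b_k^-$ and $[\mathbf b_k^+,\mathbf a_k^-]$ otherwise. Initially $\mathbf a_0^\pm=\mathbf a$, $\mathbf b_0^\pm=\mathbf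 b$, $\mathbf c_0^\pm=\mathbf f_0^\pm=\mathbf d_0^\pm=1$. Given step $k$ with $0\notin\overline{\omega_k}$, step $k+1$ consists of any real numbers satisfying: if $\mathbf a_k^+<0$, $\mathbf a_{k+1}^-\le f_{\mathbf a}(\mathbf a_k^-)$, $\mathbf a_{k+1}^+\ge f_{\mathbf a}(\mathbf a_k^+)$, $\mathbf b_{k+1}^-\le f_{\mathbf b}(\mathbf b_k^-)$, $\mathbf b_{k+1}^+\ge f_{\mathbf b}(\mathbf b_k^+)$; otherwise $\mathbf a_{k+1}^-\le f_{\mathbf a}(\mathbf a_k^+)$, $\mathbf a_{k+1}^+\ge f_{\mathbf a}(\mathbf a_k^-)$, $\mathbf b_{k+1}^-\le f_{\mathbf b}(\mathbf b_k^+)$, $\mathbf b_{k+1}^+\ge f_{\mathbf b}(\mathbf b_k^-)$; $\mathbf c_{k+1}^-\le 1+g^-(\mathbf c_k,\overline{\omega_k})$, $\mathbf c_{k+1}^+\ge 1+g^+(\mathbf c_k,\overline{\omega_k})$; $\mathbf f_{k+1}^-\le g^-(\mathbf f_k,\overline{\omega_k})$, $\mathbf f_{k+1}^+\ge g^+(\mathbf f_k,\overline{\omega_k})$; and, when $\mathbf f_{k+1}$ has definite sign, $\mathbf d_{k+1}^-\le \mathbf d_k^-+1/\mathbf f_{k+1}^+$, $\mathbf d_{k+1}^+\ge\mathbf d_k^++1/\mathbf f_{k+1}^-$. *)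

theory Defs
  imports "HOL-Analysis.Analysis"
begin

definition fa :: "real \<Rightarrow> real \<Rightarrow> real" where
  "fa a x = a - x\<^sup>2"

fun cseq :: "nat \<Rightarrow> real \<Rightarrow> real" where
  "cseq 0 a = a"
| "cseq (Suc k) a = fa a (cseq k a)"

definition gmin :: "real set \<Rightarrow> real set \<Rightarrow> real" where
  "gmin X Y = Inf {-2 * u * v | u v. u \<in> X \<and> v \<in> Y}"

definition gmax :: "real set \<Rightarrow> real set \<Rightarrow> real" where
  "gmax X Y = Sup {-2 * u * v | u v. u \<in> X \<and> v \<in> Y}"

definition ohull :: "real \<Rightarrow> real \<Rightarrow> real \<Rightarrow> real \<Rightarrow> real set" where
  "ohull aL aU bL bU = convex hull ({aL..aU} \<union> {bL..bU})"

text \<open>Lower hull (meaningful when the intervals a_k, b_k are disjoint).\<close>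
definition uhull :: "real \<Rightarrow> real \<Rightarrow> real \<Rightarrow> real \<Rightarrow> real set" where
  "uhull aL aU bL bU = (if aU < bL then {aU..bL} else {bU..aL})"

definition step_ok ::
  "real \<Rightarrow> real \<Rightarrow> (nat \<Rightarrow> real) \<Rightarrow> (nat \<Rightarrow> real) \<Rightarrow> (nat \<Rightarrow> real) \<Rightarrow> (nat \<Rightarrow> real) \<Rightarrow>
   (nat \<Rightarrow> real) \<Rightarrow> (nat \<Rightarrow> real) \<Rightarrow> (nat \<Rightarrow> real) \<Rightarrow> (nat \<Rightarrow> real) \<Rightarrow>
   (nat \<Rightarrow> real) \<Rightarrow> (nat \<Rightarrow> real) \<Rightarrow> nat \<Rightarrow> bool" where
  "step_ok a b aL aU bL bU cL cU fL fU dL dU k \<longleftrightarrow>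
     (let W = ohull (aL k) (aU k) (bL k) (bU k) in
       (if aU k < 0 then
          aL (Suc k) \<le> fa a (aL k) \<and> aU (Suc k) \<ge> fa a (aU k) \<and>
          bL (Suc k) \<le> fa b (bL k) \<and> bU (Suc k) \<ge> fa b (bU k)
        else
          aL (Suc k) \<le> fa a (aU k) \<and> aU (Suc k) \<ge> fa a (aL k) \<and>
          bL (Suc k) \<le> fa b (bU k) \<and> bU (Suc k) \<ge> fa b (bL k)) \<and>
       cL (Suc k) \<le> 1 + gmin {cL k..cU k} W \<and> cU (Suc k) \<ge> 1 + gmax {cL k..cU k} W \<and>
       fL (Suc k) \<le> gmin {fL k..fU k} W \<and> fU (Suc k) \<ge> gmax {fL k..fU k} W \<and>
       (0 \<notin> {fL (Suc k)..fU (Suc k)} \<longrightarrow>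
          dL (Suc k) \<le> dL k + 1 / fU (Suc k) \<and> dU (Suc k) \<ge> dU k + 1 / fL (Suc k)))"

end

theory Submission
  imports Defs
begin

fun cd :: "nat \<Rightarrow> real \<Rightarrow> real" where
  "cd 0 x = 1"
| "cd (Suc k) x = 1 - 2 * cseq k x * cd k x"

fun fd :: "real \<Rightarrow> nat \<Rightarrow> real \<Rightarrow> real" where
  "fd x 0 y = 1"
| "fd x (Suc k) y = -2 * (fa x ^^ k) y * fd x k y"

lemma cseq_deriv: "(cseq k has_real_derivative cd k x) (at x)"
proof (induction k)
  case 0 then show ?case by (auto intro!: derivative_eq_intros)
next
  case (Suc k)
  have e: "cseq (Suc k) = (\<lambda>x. x - (cseq k x)^2)" by (auto simp: fa_def)
  show ?case unfolding e using Suc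
    by (auto intro!: derivative_eq_intros simp: algebra_simps)
qed

lemma fpow_deriv: "((fa x ^^ k) has_real_derivative fd x k y) (at y)"
proof (induction k arbitrary: y)
  case 0 then show ?case by (auto intro!: derivative_eq_intros)
next
  case (Suc k)
  have e: "(fa x ^^ Suc k) = (\<lambda>y. x - ((fa x ^^ k) y)^2)" by (auto simp: fa_def)
  show ?case unfolding e using Suc
    by (auto intro!: derivative_eq_intros simp: algebra_simps)
qed

lemma fpow_at: "(fa x ^^ k) x = cseq k x"
  by (induction k) auto

lemma fd_Suc: "fd x (Suc k) x = -2 * cseq k x * fd x k x"
  by (simp add: fpow_at)

lemma cseq_cont: "continuous_on S (cseq k)"
  using cseq_deriv DERIV_isCont continuous_at_imp_continuous_on by blast

lemma g_bounds:
  fixes X Y :: "real set"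
  assumes "bounded X" "bounded Y" "uu \<in> X" "vv \<in> Y"
  shows "gmin X Y \<le> -2*uu* vv" "-2*uu* vv \<le> gmax X Y"
proof -
  obtain B1 where B1: "\<forall>x\<in>X. \<bar>x\<bar> \<le> B1" using assms(1) bounded_real by blast
  obtain B2 where B2: "\<forall>x\<in>Y. \<bar>x\<bar> \<le> B2" using assms(2) bounded_real by blast
  let ?S = "{-2 * u * v | u v. u \<in> X \<and> v \<in> Y}"
  have "\<forall>s\<in>?S. \<bar>s\<bar> \<le> 2*B1*B2"
  proof
    fix s assume "s \<in> ?S"
    then obtain p q where pq: "s = -2*p*q" "p \<in> X" "q \<in> Y" by blast
    have "\<bar>p\<bar> * \<bar>q\<bar> \<le> B1 * B2"
      using B1 B2 pq by (meson abs_ge_zero mult_mono order_trans)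
    then show "\<bar>s\<bar> \<le> 2*B1*B2" using pq by (simp add: abs_mult)
  qed
  then have bd: "bounded ?S" using bounded_real by blast
  have m: "-2*uu* vv \<in> ?S" using assms by blast
  show "gmin X Y \<le> -2*uu* vv" "-2*uu* vv \<le> gmax X Y" unfolding gmin_def gmax_def
    using cInf_lower[OF m bounded_imp_bdd_below[OF bd]]
          cSup_upper[OF m bounded_imp_bdd_above[OF bd]] by simp_all
qed

lemma bounded_ohull: "bounded (ohull p q r s)"
  unfolding ohull_def by (intro bounded_convex_hull) auto

lemma connected_ohull: "connected (ohull p q r s)"
  unfolding ohull_def by (simp add: convex_connected)

lemma ohull_sub1: "{p..q} \<subseteq> ohull p q r s"
  unfolding ohull_def by (meson Un_subset_iff hull_subset)
lemma ohull_sub2: "{r..s} \<subseteq> ohull p q r s"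
  unfolding ohull_def by (meson Un_subset_iff hull_subset)

lemma same_sign:
  fixes W :: "real set"
  assumes "connected W" "0 \<notin> W" "p \<in> W" "q \<in> W" "p < 0"
  shows "q < 0"
proof (rule ccontr)
  assume "\<not> q < 0"
  then have "0 \<in> {p..q}" using assms by auto
  then show False using connected_contains_Icc[OF assms(1,3,4)] assms(2) by blast
qed

lemma mono_img:
  fixes a b cL cU :: real
  assumes "a \<le> b" "\<forall>x\<in>{a..b}. cd k x \<in> {cL..cU}" "0 \<notin> {cL..cU}" "x \<in> {a..b}"
  shows "cseq k x \<in> {min (cseq k a) (cseq k b) .. max (cseq k a) (cseq k b)}"
proof -
  have ne: "cL \<le> cU" using assms by auto
  show ?thesis
  proof (cases "0 < cL")
    case True
    then have pos: "\<And>y. y \<in> {a..b} \<Longrightarrow> 0 \<le> cd k y" using assms(2) by fastforce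
    have "cseq k a \<le> cseq k x"
      by (rule deriv_nonneg_imp_mono[OF cseq_deriv]) (use pos assms(4) in auto)
    moreover have "cseq k x \<le> cseq k b"
      by (rule deriv_nonneg_imp_mono[OF cseq_deriv]) (use pos assms(4) in auto)
    ultimately show ?thesis by auto
  next
    case False
    then have "cU < 0" using assms(3) ne by auto
    then have neg: "\<And>y. y \<in> {a..b} \<Longrightarrow> cd k y \<le> 0" using assms(2) by fastforce
    have "cseq k x \<le> cseq k a"
      by (rule deriv_nonpos_imp_antimono[OF cseq_deriv]) (use neg assms(4) in auto)
    moreover have "cseq k b \<le> cseq k x"
      by (rule deriv_nonpos_imp_antimono[OF cseq_deriv]) (use neg assms(4) in auto)
    ultimately show ?thesis by auto
  qed
qed

lemma img_ohull:
  assumes "a \<le> b" "\<forall>x\<in>{a..b}. cd k x \<in> {cL..cU}" "0 \<notin> {cL..cU}"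
    "cseq k a \<in> {p..q}" "cseq k b \<in> {r..s}" "x \<in> {a..b}"
  shows "cseq k x \<in> ohull p q r s"
proof -
  have A: "cseq k a \<in> ohull p q r s" using assms(4) ohull_sub1 by blast
  have B: "cseq k b \<in> ohull p q r s" using assms(5) ohull_sub2 by blast
  have "{min (cseq k a) (cseq k b) .. max (cseq k a) (cseq k b)} \<subseteq> ohull p q r s"
    using connected_contains_Icc[OF connected_ohull] A B
    by (cases "cseq k a \<le> cseq k b") (auto simp: min_def max_def)
  then show ?thesis using mono_img[OF assms(1-3,6)] by blast
qed

lemma inv_bounds:
  fixes fL fU F :: real
  assumes "0 \<notin> {fL..fU}" "F \<in> {fL..fU}"
  shows "1/F \<in> {1/fU..1/fL}"
proof -
  have "0 < fL \<or> fU < 0" using assms by auto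
  then show ?thesis using assms
    by (auto simp: divide_simps)
qed


lemma sqL1:
  fixes p x q :: real
  assumes "p \<le> x" "x \<le> q" "q < 0"
  shows "q^2 \<le> x^2 \<and> x^2 \<le> p^2"
proof -
  have "(-q)^2 \<le> (-x)^2" by (rule power_mono) (use assms in auto)
  moreover have "(-x)^2 \<le> (-p)^2" by (rule power_mono) (use assms in auto)
  ultimately show ?thesis by simp
qed

lemma sqL2:
  fixes p x q :: real
  assumes "p \<le> x" "x \<le> q" "0 \<le> p"
  shows "p^2 \<le> x^2 \<and> x^2 \<le> q^2"
proof -
  have "p^2 \<le> x^2" by (rule power_mono) (use assms in auto)
  moreover have "x^2 \<le> q^2" by (rule power_mono) (use assms in auto)
  ultimately show ?thesis by simp
qed

theorem corollary6p1:
  fixes a b \<delta> :: real and n :: nat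
    and aL aU bL bU cL cU fL fU dL dU :: "nat \<Rightarrow> real"
  assumes "1 \<le> a" and "a < b"
    and "0 < \<delta>" and "\<delta> < 1"
    and "aL 0 = a" "aU 0 = a" "bL 0 = b" "bU 0 = b"
    and "cL 0 = 1" "cU 0 = 1" "fL 0 = 1" "fU 0 = 1" "dL 0 = 1" "dU 0 = 1"
    and "\<forall>k\<le>n. 0 \<notin> ohull (aL k) (aU k) (bL k) (bU k)"
    and "\<forall>k\<le>n. step_ok a b aL aU bL bU cL cU fL fU dL dU k"
    and "\<forall>k\<le>n. 0 \<notin> {cL (Suc k)..cU (Suc k)}"
    and "\<forall>k\<le>n. {aL (Suc k)..aU (Suc k)} \<inter> {bL (Suc k)..bU (Suc k)} = {}"
    and "\<forall>k\<le>n. 0 \<notin> {fL (Suc k)..fU (Suc k)}"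
    and "\<forall>k. k + 1 \<le> n \<longrightarrow>
           interior (ohull (aL (Suc k)) (aU (Suc k)) (bL (Suc k)) (bU (Suc k)))
             \<inter> {-\<delta><..<\<delta>} = {}"
  shows "cseq (Suc n) a \<in> {aL (Suc n)..aU (Suc n)} \<and>
         cseq (Suc n) b \<in> {bL (Suc n)..bU (Suc n)} \<and>
         (\<lambda>x. deriv (cseq (Suc n)) x) ` {a..b} \<subseteq> {cL (Suc n)..cU (Suc n)} \<and>
         (\<lambda>x. deriv (fa x ^^ Suc n) (cseq 0 x)) ` {a..b} \<subseteq> {fL (Suc n)..fU (Suc n)} \<and>
         (\<lambda>x. deriv (cseq (Suc n)) x / deriv (fa x ^^ Suc n) (cseq 0 x)) ` {a..b}
           \<subseteq> {dL (Suc n)..dU (Suc n)} \<and>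
         uhull (aL (Suc n)) (aU (Suc n)) (bL (Suc n)) (bU (Suc n)) \<subseteq> cseq (Suc n) ` {a..b} \<and>
         cseq (Suc n) ` {a..b} \<subseteq> ohull (aL (Suc n)) (aU (Suc n)) (bL (Suc n)) (bU (Suc n))"
proof -
  note A = assms
  have ab: "a \<le> b" using A(2) by simp
  have c0: "0 \<notin> {cL k..cU k}" if "k \<le> Suc n" for k
    using that A(9,10,17) by (cases k) auto
  have f0: "0 \<notin> {fL k..fU k}" if "k \<le> Suc n" for k
    using that A(11,12,19) by (cases k) auto
  define P where "P k \<longleftrightarrow> cseq k a \<in> {aL k..aU k} \<and> cseq k b \<in> {bL k..bU k} \<and>
     (\<forall>x\<in>{a..b}. cd k x \<in> {cL k..cU k} \<and> fd x k x \<in> {fL k..fU k} \<and>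
        cd k x / fd x k x \<in> {dL k..dU k})" for k
  have step: "P (Suc k)" if k: "k \<le> n" and Pk: "P k" for k
  proof -
    define W where "W = ohull (aL k) (aU k) (bL k) (bU k)"
    have W0: "0 \<notin> W" using A(15) k W_def by auto
    have Wc: "connected W" "bounded W" unfolding W_def by (rule connected_ohull, rule bounded_ohull)
    have inW: "cseq k x \<in> W" if "x \<in> {a..b}" for x
      unfolding W_def
      by (rule img_ohull[OF ab _ c0]) (use Pk that k in \<open>auto simp: P_def\<close>)
    have so: "step_ok a b aL aU bL bU cL cU fL fU dL dU k" using A(16) k by auto
    have ca: "cseq k a \<in> {aL k..aU k}" and cb: "cseq k b \<in> {bL k..bU k}" using Pk by (auto simp: P_def)
    have caW: "cseq k a \<in> W" and cbW: "cseq k b \<in> W" using inW ab by auto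
    have aLW: "aL k \<in> W" "aU k \<in> W" using ca ohull_sub1 W_def by fastforce+
    have bLW: "bL k \<in> W" "bU k \<in> W" using cb ohull_sub2 W_def by fastforce+
    have ABpart: "cseq (Suc k) a \<in> {aL (Suc k)..aU (Suc k)} \<and> cseq (Suc k) b \<in> {bL (Suc k)..bU (Suc k)}"
    proof (cases "aU k < 0")
      case True
      have "bU k < 0" using same_sign[OF Wc(1) W0 aLW(2) bLW(2) True] .
      then have s1: "aU k ^2 \<le> (cseq k a)^2 \<and> (cseq k a)^2 \<le> aL k ^2"
        and s2: "bU k ^2 \<le> (cseq k b)^2 \<and> (cseq k b)^2 \<le> bL k ^2"
        using sqL1 ca cb True by auto
      show ?thesis using so True s1 s2 by (auto simp: step_ok_def Let_def W_def fa_def)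
    next
      case False
      have "aU k \<noteq> 0" using aLW W0 by auto
      with False have pos: "0 < aU k" by simp
      have "\<not> aL k < 0" using same_sign[OF Wc(1) W0 aLW(1) aLW(2)] pos by auto
      moreover have "\<not> bL k < 0" using same_sign[OF Wc(1) W0 bLW(1) aLW(2)] pos by auto
      ultimately have s1: "aL k ^2 \<le> (cseq k a)^2 \<and> (cseq k a)^2 \<le> aU k ^2"
        and s2: "bL k ^2 \<le> (cseq k b)^2 \<and> (cseq k b)^2 \<le> bU k ^2"
        using sqL2 ca cb by auto
      show ?thesis using so False s1 s2 by (auto simp: step_ok_def Let_def W_def fa_def)
    qed
    have Xpart: "cd (Suc k) x \<in> {cL (Suc k)..cU (Suc k)} \<and> fd x (Suc k) x \<in> {fL (Suc k)..fU (Suc k)} \<and>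
        cd (Suc k) x / fd x (Suc k) x \<in> {dL (Suc k)..dU (Suc k)}" if x: "x \<in> {a..b}" for x
    proof -
      have cx: "cseq k x \<in> W" using inW x .
      have cx0: "cseq k x \<noteq> 0" using cx W0 by auto
      have cdk: "cd k x \<in> {cL k..cU k}" and fdk: "fd x k x \<in> {fL k..fU k}"
        and ddk: "cd k x / fd x k x \<in> {dL k..dU k}" using Pk x by (auto simp: P_def)
      have F0: "fd x k x \<noteq> 0" using fdk f0[of k] k by auto
      have g1: "gmin {cL k..cU k} W \<le> -2*cd k x* cseq k x" "-2*cd k x* cseq k x \<le> gmax {cL k..cU k} W"
        using g_bounds[OF _ Wc(2) cdk cx] by auto
      have g2: "gmin {fL k..fU k} W \<le> -2*fd x k x* cseq k x" "-2*fd x k x* cseq k x \<le> gmax {fL k..fU k} W"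
        using g_bounds[OF _ Wc(2) fdk cx] by auto
      have C: "cd (Suc k) x \<in> {cL (Suc k)..cU (Suc k)}"
        using so g1 by (auto simp: step_ok_def Let_def W_def algebra_simps)
      have F: "fd x (Suc k) x \<in> {fL (Suc k)..fU (Suc k)}"
        using so g2 unfolding fd_Suc by (auto simp: step_ok_def Let_def W_def algebra_simps)
      have fS0: "0 \<notin> {fL (Suc k)..fU (Suc k)}" using f0[of "Suc k"] k by auto
      have iv: "1 / fd x (Suc k) x \<in> {1/fU (Suc k)..1/fL (Suc k)}" using inv_bounds[OF fS0 F] .
      have eq: "cd (Suc k) x / fd x (Suc k) x = 1 / fd x (Suc k) x + cd k x / fd x k x"
        unfolding fd_Suc using F0 cx0 by (simp add: field_simps)
      have dd: "dL (Suc k) \<le> dL k + 1 / fU (Suc k) \<and> dU (Suc k) \<ge> dU k + 1 / fL (Suc k)"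
        using so fS0 by (auto simp: step_ok_def Let_def)
      have D: "cd (Suc k) x / fd x (Suc k) x \<in> {dL (Suc k)..dU (Suc k)}"
        unfolding eq using iv ddk dd by auto
      show ?thesis using C F D by blast
    qed
    show ?thesis unfolding P_def using ABpart Xpart by blast
  qed
  have P0: "P 0" unfolding P_def using A(5-14) by auto
  have Pall: "k \<le> Suc n \<Longrightarrow> P k" for k
  proof (induction k)
    case 0 then show ?case using P0 by simp
  next
    case (Suc k) then show ?case using step by auto
  qed
  have PN: "P (Suc n)" using Pall by simp
  have dc: "deriv (cseq (Suc n)) x = cd (Suc n) x" for x
    by (rule DERIV_imp_deriv[OF cseq_deriv])
  have df: "deriv (fa x ^^ Suc n) (cseq 0 x) = fd x (Suc n) x" for x
    unfolding cseq.simps(1) by (rule DERIV_imp_deriv[OF fpow_deriv])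
  have ca: "cseq (Suc n) a \<in> {aL (Suc n)..aU (Suc n)}" and cb: "cseq (Suc n) b \<in> {bL (Suc n)..bU (Suc n)}"
    using PN by (auto simp: P_def)
  have img: "cseq (Suc n) ` {a..b} \<subseteq> ohull (aL (Suc n)) (aU (Suc n)) (bL (Suc n)) (bU (Suc n))"
  proof
    fix y assume "y \<in> cseq (Suc n) ` {a..b}"
    then obtain x where x: "x \<in> {a..b}" "y = cseq (Suc n) x" by auto
    show "y \<in> ohull (aL (Suc n)) (aU (Suc n)) (bL (Suc n)) (bU (Suc n))"
      unfolding x(2)
      by (rule img_ohull[OF ab _ c0 ca cb x(1)]) (use PN in \<open>auto simp: P_def\<close>)
  qed
  have conn: "connected (cseq (Suc n) ` {a..b})"
    by (rule connected_continuous_image[OF cseq_cont connected_Icc])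
  have iA: "cseq (Suc n) a \<in> cseq (Suc n) ` {a..b}" and iB: "cseq (Suc n) b \<in> cseq (Suc n) ` {a..b}"
    using ab by auto
  have disj: "{aL (Suc n)..aU (Suc n)} \<inter> {bL (Suc n)..bU (Suc n)} = {}" using A(18) by auto
  have uh: "uhull (aL (Suc n)) (aU (Suc n)) (bL (Suc n)) (bU (Suc n)) \<subseteq> cseq (Suc n) ` {a..b}"
  proof (cases "aU (Suc n) < bL (Suc n)")
    case True
    have "{aU (Suc n)..bL (Suc n)} \<subseteq> {cseq (Suc n) a..cseq (Suc n) b}" using ca cb by auto
    also have "\<dots> \<subseteq> cseq (Suc n) ` {a..b}" by (rule connected_contains_Icc[OF conn iA iB])
    finally show ?thesis using True by (simp add: uhull_def)
  next
    case False
    have "bU (Suc n) < aL (Suc n)"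
    proof (rule ccontr)
      assume "\<not> bU (Suc n) < aL (Suc n)"
      then have "max (aL (Suc n)) (bL (Suc n)) \<in> {aL (Suc n)..aU (Suc n)} \<inter> {bL (Suc n)..bU (Suc n)}"
        using False ca cb by (auto simp: max_def)
      then show False using disj by blast
    qed
    then have "{bU (Suc n)..aL (Suc n)} \<subseteq> {cseq (Suc n) b..cseq (Suc n) a}" using ca cb by auto
    also have "\<dots> \<subseteq> cseq (Suc n) ` {a..b}" by (rule connected_contains_Icc[OF conn iB iA])
    finally show ?thesis using False by (simp add: uhull_def)
  qed
  show ?thesis
    using ca cb img uh PN unfolding dc df P_def by auto
qed

end
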